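(* Let $q$ be odd, let $C_1,C_2$ be linear codes of length $n$ over $\mathbb{F}_q$ that are both $b$-symbol MDS codes, with $d_b(C_1)\le d_b(C_2)$ and $1\le b\le\min\{\dim C_1,\dim C_2\}$. Let $C=\{[\mathbf{u}+\mathbf{v},\mathbf{u}-\mathbf{v}]:\mathbf{u}\in C_1,\mathbf{v}\in C_2\}\subseteq\mathbb{F}_q^{2n}$. Then $$d_b(C_1)\le d_b(C)\le d_b(C_1)+d_b(C_2)-b.$$
   Context: For $\mathbf{x}\in\mathbb{F}_q^L$ and $1\le b\le L$, $\chi_b(\mathbf{x})=\{i:(x_i,\dots,x_{i+b-1})\ne\mathbf{0}\}$ (indices mod $L$), $w_b(\mathbf{x})=|\chi_b(\mathbf{x})|$, and $d_b(C)=\min_{\mathbf{0}\ne\mathbf{c}\in C}w_b(\mathbf{c})$. An $[n,k]_q$-linear code $C$ is a $b$-symbol MDS code if $d_b(C)=\min\{n-k+b,n\}$. *)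

theory Defs
  imports Complex_Main "HOL-Library.Function_Algebras"
begin

text \<open>Vectors of length L over a field are modelled as functions nat \<Rightarrow> 'a that
vanish outside {0..<L}. Scalar multiplication is pointwise.\<close>

definition scaleF :: "'a::field \<Rightarrow> (nat \<Rightarrow> 'a) \<Rightarrow> nat \<Rightarrow> 'a" where
  "scaleF c x = (\<lambda>i. c * x i)"

lemma vector_space_scaleF: "vector_space (scaleF :: 'a::field \<Rightarrow> _)"
  by unfold_locales (auto simp: scaleF_def fun_eq_iff algebra_simps)

definition vecs :: "nat \<Rightarrow> (nat \<Rightarrow> 'a::zero) set" where
  "vecs L = {x. \<forall>i\<ge>L. x i = 0}"

definition linear_code :: "nat \<Rightarrow> (nat \<Rightarrow> 'a::field) set \<Rightarrow> bool" where
  "linear_code L C \<longleftrightarrow> module.subspace scaleF C \<and> C \<subseteq> vecs L"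

definition code_dim :: "(nat \<Rightarrow> 'a::field) set \<Rightarrow> nat" where
  "code_dim C = vector_space.dim scaleF C"

definition b_support :: "nat \<Rightarrow> nat \<Rightarrow> (nat \<Rightarrow> 'a::zero) \<Rightarrow> nat set" where
  "b_support L b x = {i. i < L \<and> (\<exists>j<b. x ((i + j) mod L) \<noteq> 0)}"

definition b_weight :: "nat \<Rightarrow> nat \<Rightarrow> (nat \<Rightarrow> 'a::zero) \<Rightarrow> nat" where
  "b_weight L b x = card (b_support L b x)"

definition b_dist :: "nat \<Rightarrow> nat \<Rightarrow> (nat \<Rightarrow> 'a::zero) set \<Rightarrow> nat" where
  "b_dist L b C = Min {b_weight L b c | c. c \<in> C \<and> c \<noteq> 0}"

definition b_symbol_MDS :: "nat \<Rightarrow> nat \<Rightarrow> (nat \<Rightarrow> 'a::field) set \<Rightarrow> bool" where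
  "b_symbol_MDS L b C \<longleftrightarrow> linear_code L C \<and>
     b_dist L b C = min (L - code_dim C + b) L"

definition plus_minus_code :: "nat \<Rightarrow> (nat \<Rightarrow> 'a::ab_group_add) set \<Rightarrow> (nat \<Rightarrow> 'a) set \<Rightarrow> (nat \<Rightarrow> 'a) set" where
  "plus_minus_code n C1 C2 = {(\<lambda>i. if i < n then u i + v i
                                  else if i < 2 * n then u (i - n) - v (i - n) else 0)
                               | u v. u \<in> C1 \<and> v \<in> C2}"

end

theory Submission imports Defs "HOL-Number_Theory.Residues" begin

interpretation V: vector_space "scaleF :: 'a::field \<Rightarrow> (nat \<Rightarrow> 'a) \<Rightarrow> nat \<Rightarrow> 'a"
  by (rule vector_space_scaleF)

lemma two_ne_zero_odd:
  assumes "odd (card (UNIV :: 'a::{finite,field} set))"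
  shows "(2::'a) \<noteq> 0"
proof
  assume h: "(2::'a) = 0"
  have "of_nat 2 = (0::'a)" using h by simp
  hence "CHAR('a) dvd 2" using of_nat_eq_0_iff_char_dvd by blast
  moreover have "CHAR('a) \<noteq> 1"
    by (metis of_nat_1 of_nat_CHAR one_neq_zero)
  ultimately have "CHAR('a) = 2"
    using dvd_imp_le[of "CHAR('a)" 2] by (cases "CHAR('a)") (auto simp: le_Suc_eq dvd_def)
  hence "even (card (UNIV :: 'a set))" using CHAR_dvd_CARD[where 'a='a] by simp
  thus False using assms by simp
qed

lemma vecs_eq: "vecs L = (\<lambda>f i. if i < L then f i else 0) ` ({..<L} \<rightarrow>\<^sub>E (UNIV::'a::zero set))"
proof -
  have "x \<in> (\<lambda>f i. if i < L then f i else 0) ` ({..<L} \<rightarrow>\<^sub>E UNIV)" if "x \<in> vecs L" for x :: "nat \<Rightarrow> 'a"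
  proof -
    have "x = (\<lambda>i. if i < L then restrict x {..<L} i else 0)"
    proof
      fix i show "x i = (if i < L then restrict x {..<L} i else 0)"
        using that unfolding vecs_def by (cases "i < L") simp_all
    qed
    moreover have "restrict x {..<L} \<in> {..<L} \<rightarrow>\<^sub>E UNIV" by simp
    ultimately show ?thesis by blast
  qed
  moreover have "(\<lambda>i. if i < L then f i else 0) \<in> vecs L" for f :: "nat \<Rightarrow> 'a"
    unfolding vecs_def by simp
  ultimately show ?thesis by blast
qed

lemma card_vecs: "card (vecs L :: (nat \<Rightarrow> 'a::{finite,zero}) set) = card (UNIV::'a set) ^ L"
  and finite_vecs: "finite (vecs L :: (nat \<Rightarrow> 'a::{finite,zero}) set)"
proof -
  have inj: "inj_on (\<lambda>f i. if i < L then f i else (0::'a)) ({..<L} \<rightarrow>\<^sub>E UNIV)"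
  proof (rule inj_onI)
    fix f g assume f: "f \<in> {..<L} \<rightarrow>\<^sub>E (UNIV::'a set)" and g: "g \<in> {..<L} \<rightarrow>\<^sub>E (UNIV::'a set)"
      and e: "(\<lambda>i. if i < L then f i else 0) = (\<lambda>i. if i < L then g i else 0)"
    show "f = g"
    proof
      fix i show "f i = g i"
      proof (cases "i < L")
        case True thus ?thesis using fun_cong[OF e, of i] by simp
      next
        case False
        hence "i \<notin> {..<L}" by simp
        thus ?thesis using PiE_arb[OF f] PiE_arb[OF g] by simp
      qed
    qed
  qed
  have "card (({..<L} \<rightarrow>\<^sub>E (UNIV::'a set))) = card (UNIV::'a set) ^ L"
    by (simp add: card_PiE)
  thus "card (vecs L :: (nat \<Rightarrow> 'a) set) = card (UNIV::'a set) ^ L"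
    unfolding vecs_eq using card_image[OF inj] by simp
  show "finite (vecs L :: (nat \<Rightarrow> 'a) set)"
    unfolding vecs_eq by (intro finite_imageI finite_PiE) auto
qed

lemma card_subspace:
  fixes C :: "(nat \<Rightarrow> 'a::{finite,field}) set"
  assumes fin: "finite C" and sub: "V.subspace C"
  shows "card C = card (UNIV::'a set) ^ V.dim C"
proof -
  obtain B where B: "B \<subseteq> C" "V.independent B" "C \<subseteq> V.span B" "card B = V.dim C"
    using V.basis_exists by blast
  have finB: "finite B" using B(1) fin finite_subset by blast
  define f where "f u = (\<Sum>v\<in>B. scaleF (u v) v)" for u :: "(nat \<Rightarrow> 'a) \<Rightarrow> 'a"
  have spanB: "V.span B = range f" unfolding f_def by (rule V.span_finite[OF finB])
  have spanC: "V.span B \<subseteq> C" using B(1) sub V.span_minimal by blast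
  have "f ` (B \<rightarrow>\<^sub>E UNIV) = C"
  proof
    show "f ` (B \<rightarrow>\<^sub>E UNIV) \<subseteq> C" using spanB spanC by auto
    show "C \<subseteq> f ` (B \<rightarrow>\<^sub>E UNIV)"
    proof
      fix c assume "c \<in> C"
      then obtain u where u: "c = f u" using B(3) spanB by auto
      have "f (restrict u B) = f u" unfolding f_def by (intro sum.cong) auto
      thus "c \<in> f ` (B \<rightarrow>\<^sub>E UNIV)" using u by (intro image_eqI[where x="restrict u B"]) auto
    qed
  qed
  moreover have inj: "inj_on f (B \<rightarrow>\<^sub>E UNIV)"
  proof (rule inj_onI)
    fix u w assume u: "u \<in> B \<rightarrow>\<^sub>E UNIV" and w: "w \<in> B \<rightarrow>\<^sub>E UNIV" and e: "f u = f w"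
    have "(\<Sum>v\<in>B. scaleF (u v - w v) v) = f u - f w"
      unfolding f_def by (simp add: V.scale_left_diff_distrib sum_subtractf)
    hence s0: "(\<Sum>v\<in>B. scaleF (u v - w v) v) = 0" using e by simp
    have "u v - w v = 0" if "v \<in> B" for v
      using V.independentD[OF B(2) finB subset_refl s0 that] .
    hence "\<forall>v\<in>B. u v - w v = 0" by blast
    thus "u = w" using u w by (auto simp: PiE_def extensional_def fun_eq_iff)
  qed
  ultimately have "card C = card (B \<rightarrow>\<^sub>E (UNIV::'a set))" using card_image[OF inj] by simp
  thus ?thesis using B(4) by (simp add: card_PiE finB)
qed

lemma mod2n:
  assumes "n > (0::nat)"
  shows "(x mod (2*n) = x mod n \<and> (x+n) mod (2*n) = x mod n + n) \<or>
         (x mod (2*n) = x mod n + n \<and> (x+n) mod (2*n) = x mod n)"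
proof -
  have a: "x mod (2*n) = n * (x div n mod 2) + x mod n"
    using mod_mult2_eq[of x n 2] by (simp add: mult.commute)
  have c: "(x+n) div n = x div n + 1" using assms div_add_self2[of n x] by simp
  have b: "(x+n) mod (2*n) = n * ((x div n + 1) mod 2) + x mod n"
    using mod_mult2_eq[of "x+n" n 2] c by (simp add: mult.commute)
  have "x div n mod 2 = 0 \<or> x div n mod 2 = 1" by presburger
  moreover have "\<forall>k::nat. k mod 2 = 0 \<longrightarrow> (k + 1) mod 2 = 1" by presburger
  moreover have "\<forall>k::nat. k mod 2 = 1 \<longrightarrow> (k + 1) mod 2 = 0" by presburger
  ultimately show ?thesis using a b by (metis mult_zero_right mult.right_neutral add.commute add_0)
qed
lemma proj:
  assumes "\<forall>m<n. w m \<noteq> 0 \<longrightarrow> c m \<noteq> 0 \<or> c (m+n) \<noteq> (0::'a::zero)"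
  shows "b_support n b w \<subseteq> (\<lambda>i. i mod n) ` b_support (2*n) b c"
proof
  fix i assume "i \<in> b_support n b w"
  then obtain j where i: "i < n" and j: "j < b" and wz: "w ((i+j) mod n) \<noteq> 0"
    by (auto simp: b_support_def)
  have n: "n > 0" using i by simp
  let ?m = "(i+j) mod n"
  have mn: "?m < n" using n by simp
  have "c ?m \<noteq> 0 \<or> c (?m + n) \<noteq> 0" using assms mn wz by blast
  moreover have e: "(i+n+j) mod (2*n) = (i+j+n) mod (2*n)" by (simp add: ac_simps)
  moreover note mod2n[OF n, of "i+j"]
  ultimately have "c ((i+j) mod (2*n)) \<noteq> 0 \<or> c ((i+n+j) mod (2*n)) \<noteq> 0"
    by metis
  then show "i \<in> (\<lambda>i. i mod n) ` b_support (2*n) b c"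
  proof
    assume h: "c ((i+j) mod (2*n)) \<noteq> 0"
    have "i \<in> b_support (2*n) b c" unfolding b_support_def using h i j by auto
    thus ?thesis using i by (intro image_eqI[where x="i"]) auto
  next
    assume h: "c ((i+n+j) mod (2*n)) \<noteq> 0"
    have "i+n \<in> b_support (2*n) b c" unfolding b_support_def using h i j by auto
    thus ?thesis using i by (intro image_eqI[where x="i+n"]) auto
  qed
qed

lemma weight_proj:
  assumes "\<forall>m<n. w m \<noteq> 0 \<longrightarrow> c m \<noteq> 0 \<or> c (m+n) \<noteq> (0::'a::zero)"
  shows "b_weight n b w \<le> b_weight (2*n) b c"
proof -
  have f: "finite (b_support (2*n) b c)" 
    by (rule finite_subset[of _ "{..<2*n}"]) (auto simp: b_support_def)
  have "card (b_support n b w) \<le> card ((\<lambda>i. i mod n) ` b_support (2*n) b c)"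
    using proj[OF assms] f by (intro card_mono) auto
  also have "\<dots> \<le> card (b_support (2*n) b c)" using f card_image_le by blast
  finally show ?thesis unfolding b_weight_def .
qed


lemma bdist_le:
  assumes "finite C" "c \<in> C" "c \<noteq> 0"
  shows "b_dist L b C \<le> b_weight L b c"
proof -
  have "{b_weight L b c | c. c \<in> C \<and> c \<noteq> 0} = b_weight L b ` {c \<in> C. c \<noteq> 0}" by auto
  hence fin: "finite {b_weight L b c | c. c \<in> C \<and> c \<noteq> 0}" using assms(1) by simp
  show ?thesis unfolding b_dist_def by (rule Min_le[OF fin]) (use assms in auto)
qed

lemma bdist_ge:
  assumes "finite C" "c \<in> C" "c \<noteq> 0" "\<And>c. c \<in> C \<Longrightarrow> c \<noteq> 0 \<Longrightarrow> x \<le> b_weight L b c"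
  shows "x \<le> b_dist L b C"
proof -
  have "{b_weight L b c | c. c \<in> C \<and> c \<noteq> 0} = b_weight L b ` {c \<in> C. c \<noteq> 0}" by auto
  hence fin: "finite {b_weight L b c | c. c \<in> C \<and> c \<noteq> 0}" using assms(1) by simp
  show ?thesis unfolding b_dist_def
    by (rule Min.boundedI[OF fin]) (use assms in auto)
qed

theorem mainTheorem12:
  fixes C1 C2 :: "(nat \<Rightarrow> 'a::{finite, field}) set" and n b :: nat
  assumes "odd (card (UNIV :: 'a set))"
    and "linear_code n C1" and "linear_code n C2"
    and "b_symbol_MDS n b C1" and "b_symbol_MDS n b C2"
    and "b_dist n b C1 \<le> b_dist n b C2"
    and "1 \<le> b" and "b \<le> min (code_dim C1) (code_dim C2)"
  shows "b_dist n b C1 \<le> b_dist (2 * n) b (plus_minus_code n C1 C2)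
       \<and> b_dist (2 * n) b (plus_minus_code n C1 C2) \<le> b_dist n b C1 + b_dist n b C2 - b"
proof -
  let ?q = "card (UNIV::'a set)"
  have two: "(2::'a) \<noteq> 0" by (rule two_ne_zero_odd[OF assms(1)])
  have "card {0::'a, 1} \<le> ?q" by (rule card_mono) auto
  hence q2: "?q \<ge> 2" by simp
  have sub1: "V.subspace C1" and vec1: "C1 \<subseteq> vecs n" using assms(2) by (auto simp: linear_code_def)
  have sub2: "V.subspace C2" and vec2: "C2 \<subseteq> vecs n" using assms(3) by (auto simp: linear_code_def)
  have fin1: "finite C1" using vec1 finite_vecs finite_subset by blast
  have fin2: "finite C2" using vec2 finite_vecs finite_subset by blast
  define k1 where "k1 = code_dim C1"
  define k2 where "k2 = code_dim C2"
  have card1: "card C1 = ?q ^ k1" unfolding k1_def code_dim_def by (rule card_subspace[OF fin1 sub1])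
  have card2: "card C2 = ?q ^ k2" unfolding k2_def code_dim_def by (rule card_subspace[OF fin2 sub2])
  have "card C1 \<le> card (vecs n :: (nat \<Rightarrow> 'a) set)" by (rule card_mono[OF finite_vecs vec1])
  hence "?q ^ k1 \<le> ?q ^ n" by (simp only: card1 card_vecs)
  moreover have "1 < ?q" using q2 by simp
  ultimately have k1n: "k1 \<le> n" using power_le_imp_le_exp by blast
  have "card C2 \<le> card (vecs n :: (nat \<Rightarrow> 'a) set)" by (rule card_mono[OF finite_vecs vec2])
  hence "?q ^ k2 \<le> ?q ^ n" by (simp only: card2 card_vecs)
  moreover have "1 < ?q" using q2 by simp
  ultimately have k2n: "k2 \<le> n" using power_le_imp_le_exp by blast
  have bk1: "b \<le> k1" and bk2: "b \<le> k2" using assms(8) by (auto simp: k1_def k2_def)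
  have d1: "b_dist n b C1 = n - k1 + b" using assms(4) bk1 k1n by (auto simp: b_symbol_MDS_def k1_def)
  have d2: "b_dist n b C2 = n - k2 + b" using assms(5) bk2 k2n by (auto simp: b_symbol_MDS_def k2_def)
  define pm where "pm u v = (\<lambda>i. if i < n then u i + v i else if i < 2*n then u (i-n) - v (i-n) else 0)"
    for u v :: "nat \<Rightarrow> 'a"
  define PM where "PM = plus_minus_code n C1 C2"
  have PMeq: "PM = (\<lambda>(u,v). pm u v) ` (C1 \<times> C2)"
    unfolding PM_def plus_minus_code_def pm_def by auto
  have pm_lo: "pm u v m = u m + v m" if "m < n" for u v m using that by (simp add: pm_def)
  have pm_hi: "pm u v (m+n) = u m - v m" if "m < n" for u v m using that by (simp add: pm_def)
  have key: "pm u v m \<noteq> 0 \<or> pm u v (m+n) \<noteq> 0" if "m < n" "u m \<noteq> 0 \<or> v m \<noteq> 0" for u v m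
  proof (rule ccontr)
    assume "\<not> ?thesis"
    hence a: "u m + v m = 0" "u m - v m = 0" using pm_lo pm_hi that(1) by auto
    have "2 * u m = (u m + v m) + (u m - v m)" "2 * v m = (u m + v m) - (u m - v m)" by (simp_all add: algebra_simps mult_2)
    hence "2 * u m = 0" "2 * v m = 0" using a by simp_all
    thus False using two that(2) by simp
  qed
  have inj: "inj_on (\<lambda>(u,v). pm u v) (C1 \<times> C2)"
  proof (rule inj_onI, clarify)
    fix u v u' v' assume u: "u \<in> C1" "u' \<in> C1" and v: "v \<in> C2" "v' \<in> C2" and e: "pm u v = pm u' v'"
    have "u i = u' i \<and> v i = v' i" for i
    proof (cases "i < n")
      case True
      have a: "u i + v i = u' i + v' i" "u i - v i = u' i - v' i"
        using fun_cong[OF e, of i] fun_cong[OF e, of "i+n"] pm_lo pm_hi True by auto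
      have h: "2 * x = (x + y) + (x - y)" "2 * y = (x + y) - (x - y)" for x y :: 'a
        by (simp_all add: algebra_simps mult_2)
      have "2 * u i = 2 * u' i" using h(1)[of "u i" "v i"] h(1)[of "u' i" "v' i"] a by metis
      moreover have "2 * v i = 2 * v' i" using h(2)[where x="u i" and y="v i"] h(2)[where x="u' i" and y="v' i"] a by metis
      ultimately have "2 * u i = 2 * u' i" "2 * v i = 2 * v' i" by blast+
      thus ?thesis using two by simp
    next
      case False
      have "\<forall>x\<in>C1. x i = 0" "\<forall>x\<in>C2. x i = 0" using vec1 vec2 False by (auto simp: vecs_def subset_iff)
      hence "u i = 0" "u' i = 0" "v i = 0" "v' i = 0" using u v by blast+
      thus ?thesis by simp
    qed
    thus "u = u' \<and> v = v'" by (simp add: fun_eq_iff)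
  qed
  have finPM: "finite PM" unfolding PMeq using fin1 fin2 by simp
  have cardPM: "card PM = ?q ^ (k1 + k2)"
    unfolding PMeq using card_image[OF inj] card1 card2 by (simp add: card_cartesian_product power_add)
  have diffPM: "x - y \<in> PM" if xP: "x \<in> PM" and yP: "y \<in> PM" for x y
  proof -
    obtain u v where x: "x = pm u v" "u \<in> C1" "v \<in> C2" using xP PMeq by auto
    obtain u' v' where y: "y = pm u' v'" "u' \<in> C1" "v' \<in> C2" using yP PMeq by auto
    have "x - y = pm (u - u') (v - v')" unfolding x y pm_def by (auto simp: fun_eq_iff algebra_simps)
    moreover have "u - u' \<in> C1" using V.subspace_diff[OF sub1 x(2) y(2)] .
    moreover have "v - v' \<in> C2" using V.subspace_diff[OF sub2 x(3) y(3)] .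
    ultimately show ?thesis unfolding PMeq by auto
  qed
  define K where "K = k1 + k2"
  define R where "R x = (\<lambda>i. if i < K - 1 then x i else 0)" for x :: "nat \<Rightarrow> 'a"
  have "R ` PM \<subseteq> vecs (K - 1)" by (auto simp: R_def vecs_def)
  hence "card (R ` PM) \<le> ?q ^ (K - 1)" using card_mono[OF finite_vecs] card_vecs by metis
  also have "\<dots> < ?q ^ K" using q2 bk1 assms(7) K_def by (intro power_strict_increasing) auto
  finally have "\<not> inj_on R PM" using cardPM card_image K_def by fastforce
  then obtain x y where xy: "x \<in> PM" "y \<in> PM" "R x = R y" "x \<noteq> y" unfolding inj_on_def by blast
  define c where "c = x - y"
  have cPM: "c \<in> PM" unfolding c_def using diffPM xy by blast
  have cnz: "c \<noteq> 0" unfolding c_def using xy(4) by simp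
  have czero: "c i = 0" if "i < K - 1" for i
    using fun_cong[OF xy(3), of i] that by (simp add: R_def c_def)
  have K2n: "K \<le> 2 * n" using k1n k2n K_def by simp
  have "b_support (2*n) b c \<subseteq> {K - b..<2*n}"
  proof
    fix i assume "i \<in> b_support (2*n) b c"
    then obtain j where i: "i < 2*n" and j: "j < b" and nz: "c ((i+j) mod (2*n)) \<noteq> 0"
      by (auto simp: b_support_def)
    show "i \<in> {K - b..<2*n}"
    proof (rule ccontr)
      assume "i \<notin> {K - b..<2*n}"
      hence "i < K - b" using i by auto
      hence lt: "i + j < K - 1" using j by linarith
      hence "(i+j) mod (2*n) = i + j" using K2n by simp
      thus False using nz czero[OF lt] by simp
    qed
  qed
  hence "b_weight (2*n) b c \<le> 2*n - (K - b)" unfolding b_weight_def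
    using card_mono[of "{K - b..<2*n}"] by fastforce
  hence up: "b_dist (2*n) b PM \<le> 2*n - (K - b)" using bdist_le[OF finPM cPM cnz, of "2*n" b] by linarith
  have "?q ^ 1 \<le> ?q ^ k1" using q2 bk1 assms(7) by (intro power_increasing) auto
  hence c2: "card C1 \<ge> 2" using card1 q2 by simp
  have "\<exists>u\<in>C1. u \<noteq> 0"
  proof (rule ccontr)
    assume "\<not> ?thesis"
    hence "C1 \<subseteq> {0}" by auto
    hence "card C1 \<le> card {0::nat \<Rightarrow> 'a}" by (intro card_mono) auto
    thus False using c2 by simp
  qed
  then obtain u0 where u0: "u0 \<in> C1" "u0 \<noteq> 0" by blast
  have z2: "0 \<in> C2" using V.subspace_0[OF sub2] .
  obtain m where m: "u0 m \<noteq> 0" using u0(2) by (auto simp: fun_eq_iff)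
  have "\<forall>i\<ge>n. u0 i = 0" using u0(1) vec1 by (auto simp: vecs_def)
  hence mn: "m < n" using m not_le by blast
  have pm0: "pm u0 0 \<in> PM" unfolding PMeq using u0 z2 by auto
  have pm0nz: "pm u0 0 \<noteq> 0"
  proof
    assume "pm u0 0 = 0"
    hence "pm u0 0 m = 0" by simp
    thus False using pm_lo[OF mn, of u0 0] m by simp
  qed
  have low: "b_dist n b C1 \<le> b_dist (2*n) b PM"
  proof (rule bdist_ge[OF finPM pm0 pm0nz])
    fix c assume "c \<in> PM" "c \<noteq> 0"
    then obtain u v where c: "c = pm u v" "u \<in> C1" "v \<in> C2" using PMeq by auto
    have ku: "\<forall>m<n. u m \<noteq> 0 \<longrightarrow> c m \<noteq> 0 \<or> c (m+n) \<noteq> 0" using key c(1) by blast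
    have kv: "\<forall>m<n. v m \<noteq> 0 \<longrightarrow> c m \<noteq> 0 \<or> c (m+n) \<noteq> 0" using key c(1) by blast
    show "b_dist n b C1 \<le> b_weight (2*n) b c"
    proof (cases "u = 0")
      case False
      thus ?thesis using order_trans[OF bdist_le[OF fin1 c(2) False, of n b] weight_proj[OF ku, of b]] by simp
    next
      case True
      have "v \<noteq> 0"
      proof
        assume "v = 0"
        have "pm (0::nat\<Rightarrow>'a) 0 = 0" unfolding pm_def by (rule ext) simp
        hence "c = 0" using True c(1) \<open>v = 0\<close> by simp
        thus False using \<open>c \<noteq> 0\<close> by simp
      qed
      thus ?thesis using order_trans[OF assms(6) order_trans[OF bdist_le[OF fin2 c(3) \<open>v \<noteq> 0\<close>, of n b] weight_proj[OF kv, of b]]] by simp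
    qed
  qed
  have eq: "2*n - (K - b) = b_dist n b C1 + b_dist n b C2 - b"
    unfolding d1 d2 K_def using k1n k2n bk1 by arith
  have up2: "b_dist (2*n) b PM \<le> b_dist n b C1 + b_dist n b C2 - b" using up eq by linarith
  show ?thesis using low up2 unfolding PM_def by blast
qed

end
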